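(* Let $X$ be a smooth complex algebraic variety, $f\in\mathcal{O}_X(X)$ nonzero, $\pi\colon X\times\mathbb{C}\to X$ the projection, and $\alpha\in\mathbb{Q}$. Define $\tau_\alpha\colon\pi_*V^\alpha\iota_+\mathcal{O}_X\to\mathcal{M}(f^{-\alpha})$ by $$\tau_\alpha\Big(\sum_{i=0}^pv_i\partial_t^i\delta\Big)=\Big(\sum_{i=0}^pQ_i(\alpha)\frac{v_i}{f^i}\Big)f^{-\alpha},\qquad Q_i(x)=\prod_{j=0}^{i-1}(x+j),\ Q_0=1.$$ Then $\tau_\alpha$ is a morphism of $\mathscr{D}_X$-modules, and, identifying $\mathcal{M}(f^{-\alpha})$ with $\mathcal{M}(f^{-\alpha-1})$ via $wf^{-\alpha}\mapsto(wf)f^{-\alpha-1}$, we have $\tau_{\alpha+1}(tv)=\tau_\alpha(v)$ for every $v\in V^\alpha\iota_+\mathcal{O}_X$ and $\tau_\alpha(\partial_tv)=\alpha\,\tau_{\alpha+1}(v)$ for every $v\in V^{\alpha+1}\iota_+\mathcal{O}_X$.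
   Context: $\iota\colon X\to X\times\mathbb{C}$ is the graph embedding of $f$, $t$ the coordinate on $\mathbb{C}$; $\iota_+\mathcal{O}_X=\bigoplus_{i\ge0}\mathcal{O}_X\partial_t^i\delta$ uniquely, $\delta$ the class of $1/(f-t)$, with $t(v\partial_t^i\delta)=fv\partial_t^i\delta-iv\partial_t^{i-1}\delta$ and $P(v\partial_t^i\delta)=P(v)\partial_t^i\delta-P(f)v\partial_t^{i+1}\delta$ for derivations $P$. $(V^\beta)_{\beta\in\mathbb{Q}}$ is the decreasing Kashiwara–Malgrange $V$-filtration along $t=0$ (with $tV^\beta\subseteq V^{\beta+1}$, $\partial_tV^\beta\subseteq V^{\beta-1}$). $\mathcal{M}(f^{-\alpha})=\mathcal{O}_X[1/f]f^{-\alpha}$, free of rank one over $\mathcal{O}_X[1/f]$, with $P(wf^{-\alpha})=(P(w)-\alpha wP(f)/f)f^{-\alpha}$. *)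

theory Defs
  imports Complex_Main
begin

text \<open>K (the type 'a) is a field of characteristic 0
 containing the ring of regular functions O = O_X(U) of an affine open U of X,
 with a structure embedding emb of the complex numbers into O.
 Elements of the direct image iota_+ O_X are encoded by coefficient sequences
 v :: nat => 'a, v i \<in> O, finitely supported, standing for sum_i v_i dt^i delta.
 Elements w f^(-alpha) of M(f^(-alpha)) are encoded by their coefficient w in O[1/f].\<close>

definition is_subring :: "'a::field_char_0 set \<Rightarrow> bool" where
  "is_subring R \<longleftrightarrow> 0 \<in> R \<and> 1 \<in> R \<and>
     (\<forall>x\<in>R. \<forall>y\<in>R. x + y \<in> R \<and> x - y \<in> R \<and> x * y \<in> R)"

definition is_C_embedding :: "(complex \<Rightarrow> 'a::field_char_0) \<Rightarrow> 'a set \<Rightarrow> bool" where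
  "is_C_embedding emb R \<longleftrightarrow> emb 1 = 1 \<and> (\<forall>z w. emb (z + w) = emb z + emb w) \<and>
     (\<forall>z w. emb (z * w) = emb z * emb w) \<and> range emb \<subseteq> R"

text \<open>A C-linear derivation of K preserving O (i.e. the unique extension to K of a
 C-linear derivation of O = O_X(U), a vector field on U).\<close>
definition is_derivation :: "(complex \<Rightarrow> 'a::field_char_0) \<Rightarrow> 'a set \<Rightarrow> ('a \<Rightarrow> 'a) \<Rightarrow> bool" where
  "is_derivation emb R P \<longleftrightarrow> (\<forall>x y. P (x + y) = P x + P y) \<and>
     (\<forall>x y. P (x * y) = x * P y + P x * y) \<and>
     (\<forall>z x. P (emb z * x) = emb z * P x) \<and> P ` R \<subseteq> R"

definition iplus :: "'a::field_char_0 set \<Rightarrow> (nat \<Rightarrow> 'a) set" where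
  "iplus R = {v. finite {i. v i \<noteq> 0} \<and> (\<forall>i. v i \<in> R)}"

text \<open>t (v dt^i delta) = f v dt^i delta - i v dt^(i-1) delta\<close>
definition t_act :: "'a::field_char_0 \<Rightarrow> (nat \<Rightarrow> 'a) \<Rightarrow> (nat \<Rightarrow> 'a)" where
  "t_act f v = (\<lambda>i. f * v i - of_nat (Suc i) * v (Suc i))"

definition dt_act :: "(nat \<Rightarrow> 'a::field_char_0) \<Rightarrow> (nat \<Rightarrow> 'a)" where
  "dt_act v = (\<lambda>i. case i of 0 \<Rightarrow> 0 | Suc j \<Rightarrow> v j)"

text \<open>P (v dt^i delta) = P(v) dt^i delta - P(f) v dt^(i+1) delta\<close>
definition der_act :: "('a::field_char_0 \<Rightarrow> 'a) \<Rightarrow> 'a \<Rightarrow> (nat \<Rightarrow> 'a) \<Rightarrow> (nat \<Rightarrow> 'a)" where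
  "der_act P f v = (\<lambda>i. P (v i) - (case i of 0 \<Rightarrow> 0 | Suc j \<Rightarrow> P f * v j))"

definition mult_act :: "'a::field_char_0 \<Rightarrow> (nat \<Rightarrow> 'a) \<Rightarrow> (nat \<Rightarrow> 'a)" where
  "mult_act a v = (\<lambda>i. a * v i)"

definition localization :: "'a::field_char_0 set \<Rightarrow> 'a \<Rightarrow> 'a set" where
  "localization R f = {a / f ^ k | a k. a \<in> R}"

text \<open>Action of a vector field on M(f^(-alpha)), on coefficients:
 P(w f^(-alpha)) = (P(w) - alpha w P(f)/f) f^(-alpha).\<close>
definition M_der :: "('a::field_char_0 \<Rightarrow> 'a) \<Rightarrow> 'a \<Rightarrow> rat \<Rightarrow> 'a \<Rightarrow> 'a" where
  "M_der P f \<alpha> w = P w - of_rat \<alpha> * w * P f / f"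

text \<open>tau_alpha (sum v_i dt^i delta) = (sum Q_i(alpha) v_i / f^i) f^(-alpha),
 Q_i(x) = x(x+1)...(x+i-1) = pochhammer x i.\<close>
definition tau :: "'a::field_char_0 \<Rightarrow> rat \<Rightarrow> (nat \<Rightarrow> 'a) \<Rightarrow> 'a" where
  "tau f \<alpha> v = (\<Sum>i\<in>{i. v i \<noteq> 0}. of_rat (pochhammer \<alpha> i) * v i / f ^ i)"

end

theory Submission imports Defs begin

lemma emb_basic:
  assumes "is_C_embedding emb R"
  shows "emb 0 = 0" "emb (of_nat n) = of_nat n" "emb (- z) = - emb z"
    "emb (of_int k) = of_int k" "emb (of_rat q) = of_rat q"
proof -
  have add: "\<And>z w. emb (z + w) = emb z + emb w" and mul: "\<And>z w. emb (z * w) = emb z * emb w"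
    and one: "emb 1 = 1" using assms unfolding is_C_embedding_def by auto
  show z: "emb 0 = 0" using add[of 0 0] by simp
  show nat: "\<And>n. emb (of_nat n) = of_nat n"
  proof -
    fix n show "emb (of_nat n) = of_nat n" by (induction n) (simp_all add: z add one)
  qed
  show neg: "\<And>z. emb (- z) = - emb z"
  proof -
    fix z have "emb (- z) + emb z = 0" using add[of "-z" z] z by simp
    then show "emb (- z) = - emb z" by (simp add: eq_neg_iff_add_eq_0)
  qed
  show int: "\<And>k. emb (of_int k) = of_int k"
  proof -
    fix k :: int show "emb (of_int k) = of_int k"
      by (cases k rule: int_cases) (simp_all add: nat neg del: of_nat_Suc)
  qed
  show "emb (of_rat q) = of_rat q"
  proof (cases q)
    case (Fract a b)
    then have b: "b \<noteq> 0" by simp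
    have "(of_rat q :: complex) = of_int a / of_int b" using Fract of_rat_rat b by blast
    moreover have "emb (of_int a / of_int b) = of_int a / of_int b"
    proof -
      have "emb (of_int a / of_int b) * emb (of_int b) = emb (of_int a)"
        using mul[of "of_int a / of_int b" "of_int b"] b by simp
      then show ?thesis using b by (simp add: int field_simps)
    qed
    ultimately show ?thesis using Fract of_rat_rat b by metis
  qed
qed

lemma der_basic:
  assumes "is_derivation emb R P" "is_C_embedding emb R"
  shows "P 0 = 0" "P 1 = 0" "P (of_rat q * x) = of_rat q * P x"
    "y \<noteq> 0 \<Longrightarrow> P (x / y) = (P x * y - x * P y) / y^2"
    "P (y ^ n) * y = of_nat n * y ^ n * P y"
    "P (sum g S) = (\<Sum>i\<in>S. P (g i))"
    "P (x - y) = P x - P y"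
proof -
  have add: "\<And>x y. P (x + y) = P x + P y" and mul: "\<And>x y. P (x * y) = x * P y + P x * y"
    and sc: "\<And>z x. P (emb z * x) = emb z * P x" using assms(1) unfolding is_derivation_def by auto
  show z: "P 0 = 0" using add[of 0 0] by simp
  show o: "P 1 = 0" using mul[of 1 1] by simp
  show "P (of_rat q * x) = of_rat q * P x" using sc[of "of_rat q" x] emb_basic(5)[OF assms(2)] by simp
  show "P (x - y) = P x - P y" using add[of "x - y" y] by (simp add: algebra_simps)
  show "y \<noteq> 0 \<Longrightarrow> P (x / y) = (P x * y - x * P y) / y^2"
  proof -
    assume y: "y \<noteq> 0"
    have "P (x / y * y) = P x" using y by simp
    then have "x / y * P y + P (x / y) * y = P x" using mul[of "x/y" y] by simp
    then have "P (x / y) = (P x - x / y * P y) / y" using y by (simp add: field_simps)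
    then show ?thesis using y by (simp add: field_simps power2_eq_square)
  qed
  show "P (y ^ n) * y = of_nat n * y ^ n * P y"
    by (induction n) (simp_all add: o mul algebra_simps)
  show "P (sum g S) = (\<Sum>i\<in>S. P (g i))"
    by (induction S rule: infinite_finite_induct) (simp_all add: z add)
qed

lemma tau_N:
  assumes "\<And>i. i \<ge> N \<Longrightarrow> v i = 0"
  shows "tau f \<alpha> v = (\<Sum>i<N. of_rat (pochhammer \<alpha> i) * v i / f ^ i)"
  unfolding tau_def
proof (rule sum.mono_neutral_left)
  show "{i. v i \<noteq> 0} \<subseteq> {..<N}" using assms by (auto simp: not_less[symmetric])
qed auto

lemma iplus_bound:
  assumes "v \<in> iplus R" obtains N where "\<And>i. i \<ge> N \<Longrightarrow> v i = 0"
proof -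
  have "finite {i. v i \<noteq> 0}" using assms unfolding iplus_def by auto
  then obtain N where "\<forall>n\<in>{i. v i \<noteq> 0}. n < N" using finite_nat_set_iff_bounded by blast
  then show ?thesis using that by (meson linorder_not_less mem_Collect_eq)
qed

lemma t_claim:
  assumes f: "f \<noteq> 0" and N: "\<And>i. i \<ge> N \<Longrightarrow> v i = 0"
  shows "tau f (\<alpha> + 1) (t_act f v) = tau f \<alpha> v * f"
proof -
  let ?c = "\<lambda>a i. of_rat (pochhammer a i) :: 'a"
  have Nt: "\<And>i. i \<ge> N \<Longrightarrow> t_act f v i = 0" using N by (simp add: t_act_def)
  have "tau f (\<alpha> + 1) (t_act f v) = (\<Sum>i<N. ?c (\<alpha>+1) i * (f * v i - of_nat (Suc i) * v (Suc i)) / f ^ i)"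
    using tau_N[OF Nt] by (simp add: t_act_def)
  also have "\<dots> = (\<Sum>i<N. ?c (\<alpha>+1) i * f * v i / f ^ i) - (\<Sum>i<N. ?c (\<alpha>+1) i * of_nat (Suc i) * v (Suc i) / f ^ i)"
    by (simp add: sum_subtractf[symmetric] algebra_simps diff_divide_distrib)
  also have "(\<Sum>i<N. ?c (\<alpha>+1) i * of_nat (Suc i) * v (Suc i) / f ^ i)
      = (\<Sum>i<Suc N. (if i = 0 then 0 else ?c (\<alpha>+1) (i - 1) * of_nat i * v i * f / f ^ i))"
    by (subst sum.lessThan_Suc_shift) (simp add: f)
  also have "\<dots> = (\<Sum>i<N. (if i = 0 then 0 else ?c (\<alpha>+1) (i - 1) * of_nat i * v i * f / f ^ i))"
    using N by simp
  also have "(\<Sum>i<N. ?c (\<alpha>+1) i * f * v i / f ^ i) - \<dots> = (\<Sum>i<N. ?c \<alpha> i * v i / f ^ i * f)"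
    unfolding sum_subtractf[symmetric]
  proof (rule sum.cong)
    fix i assume "i \<in> {..<N}"
    show "?c (\<alpha>+1) i * f * v i / f ^ i - (if i = 0 then 0 else ?c (\<alpha>+1) (i - 1) * of_nat i * v i * f / f ^ i)
       = ?c \<alpha> i * v i / f ^ i * f"
    proof (cases i)
      case 0 then show ?thesis by simp
    next
      case (Suc m)
      have "pochhammer (\<alpha>+1) (Suc m) - pochhammer (\<alpha>+1) m * of_nat (Suc m) = pochhammer \<alpha> (Suc m)"
      proof -
        have a: "pochhammer (\<alpha>+1) (Suc m) = (\<alpha>+1+of_nat m) * pochhammer (\<alpha>+1) m" by (rule pochhammer_rec')
        have b: "pochhammer \<alpha> (Suc m) = \<alpha> * pochhammer (\<alpha>+1) m" by (rule pochhammer_rec)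
        show ?thesis unfolding a b by (simp add: algebra_simps)
      qed
      then have "?c (\<alpha>+1) (Suc m) - ?c (\<alpha>+1) m * of_nat (Suc m) = ?c \<alpha> (Suc m)"
        by (metis of_rat_diff of_rat_mult of_rat_of_nat_eq)
      then show ?thesis using Suc by (simp add: field_simps)
    qed
  qed simp
  also have "\<dots> = tau f \<alpha> v * f" using tau_N[OF N] by (simp add: sum_distrib_right)
  finally show ?thesis .
qed

lemma dt_claim:
  assumes f: "f \<noteq> 0" and N: "\<And>i. i \<ge> N \<Longrightarrow> v i = 0"
  shows "tau f \<alpha> (dt_act v) * f = of_rat \<alpha> * tau f (\<alpha> + 1) v"
proof -
  have Nt: "\<And>i. i \<ge> Suc N \<Longrightarrow> dt_act v i = 0" using N by (simp add: dt_act_def split: nat.split)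
  have "tau f \<alpha> (dt_act v) * f = (\<Sum>i<Suc N. of_rat (pochhammer \<alpha> i) * dt_act v i / f ^ i) * f"
    using tau_N[OF Nt] by simp
  also have "\<dots> = (\<Sum>i<N. of_rat (pochhammer \<alpha> (Suc i)) * v i / f ^ i)"
    by (subst sum.lessThan_Suc_shift) (simp add: dt_act_def sum_distrib_right f)
  also have "\<dots> = of_rat \<alpha> * (\<Sum>i<N. of_rat (pochhammer (\<alpha>+1) i) * v i / f ^ i)"
    by (simp add: sum_distrib_left pochhammer_rec of_rat_mult mult.assoc)
  also have "\<dots> = of_rat \<alpha> * tau f (\<alpha> + 1) v" using tau_N[OF N] by simp
  finally show ?thesis .
qed

lemma der_claim:
  assumes f: "f \<noteq> 0" and N: "\<And>i. i \<ge> N \<Longrightarrow> v i = 0"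
    and P: "is_derivation emb R P" and emb: "is_C_embedding emb R"
  shows "tau f \<alpha> (der_act P f v) = M_der P f \<alpha> (tau f \<alpha> v)"
proof -
  let ?c = "\<lambda>i. of_rat (pochhammer \<alpha> i) :: 'a"
  note D = der_basic[OF P emb]
  have Nt: "\<And>i. i \<ge> Suc N \<Longrightarrow> der_act P f v i = 0"
    using N D(1) by (auto simp: der_act_def split: nat.split)
  have "tau f \<alpha> (der_act P f v) = (\<Sum>i<Suc N. ?c i * der_act P f v i / f ^ i)"
    using tau_N[OF Nt] by simp
  also have "\<dots> = (\<Sum>i<Suc N. ?c i * P (v i) / f ^ i)
      - (\<Sum>i<Suc N. ?c i * (case i of 0 \<Rightarrow> 0 | Suc j \<Rightarrow> P f * v j) / f ^ i)"
    by (simp add: der_act_def right_diff_distrib diff_divide_distrib sum_subtractf)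
  also have "(\<Sum>i<Suc N. ?c i * P (v i) / f ^ i) = (\<Sum>i<N. ?c i * P (v i) / f ^ i)"
    using N D(1) by simp
  also have "(\<Sum>i<Suc N. ?c i * (case i of 0 \<Rightarrow> 0 | Suc j \<Rightarrow> P f * v j) / f ^ i)
     = (\<Sum>i<N. ?c (Suc i) * P f * v i / f ^ Suc i)"
    by (subst sum.lessThan_Suc_shift) (simp add: mult.assoc)
  also have "(\<Sum>i<N. ?c i * P (v i) / f ^ i) - (\<Sum>i<N. ?c (Suc i) * P f * v i / f ^ Suc i)
     = (\<Sum>i<N. P (?c i * v i / f ^ i)) - (\<Sum>i<N. of_rat \<alpha> * (?c i * v i / f ^ i) * P f / f)"
    unfolding sum_subtractf[symmetric]
  proof (rule sum.cong)
    fix i assume "i \<in> {..<N}"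
    have fi: "f ^ i \<noteq> 0" using f by simp
    have pf: "P (f ^ i) = of_nat i * f ^ i * P f / f" using D(5)[of f i] f by (simp add: field_simps)
    have "P (?c i * v i / f ^ i) = ?c i * P (v i / f ^ i)"
      using D(3)[of "pochhammer \<alpha> i" "v i / f ^ i"] by simp
    also have "\<dots> = ?c i * ((P (v i) * f ^ i - v i * P (f ^ i)) / (f ^ i)\<^sup>2)" using D(4)[OF fi] by simp
    finally have e: "P (?c i * v i / f ^ i) = ?c i * ((P (v i) * f ^ i - v i * (of_nat i * f ^ i * P f / f)) / (f ^ i)\<^sup>2)"
      using pf by simp
    have cs: "?c (Suc i) = (of_rat \<alpha> + of_nat i) * ?c i"
      by (simp add: pochhammer_rec' of_rat_mult of_rat_add)
    show "?c i * P (v i) / f ^ i - ?c (Suc i) * P f * v i / f ^ Suc i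
       = P (?c i * v i / f ^ i) - of_rat \<alpha> * (?c i * v i / f ^ i) * P f / f"
      unfolding e cs using f by (simp add: field_simps power2_eq_square)
  qed simp
  also have "\<dots> = M_der P f \<alpha> (tau f \<alpha> v)"
  proof -
    have tv: "tau f \<alpha> v = (\<Sum>i<N. ?c i * v i / f ^ i)" by (rule tau_N[OF N])
    show ?thesis unfolding M_der_def tv D(6) by (simp add: sum_distrib_left sum_distrib_right sum_divide_distrib)
  qed
  finally show ?thesis .
qed

lemma sub_sum:
  assumes "is_subring R" "\<And>i. i \<in> S \<Longrightarrow> g i \<in> R" shows "sum g S \<in> R"
  using assms(2)
proof (induction S rule: infinite_finite_induct)
  case (insert x F) then show ?case using assms(1) unfolding is_subring_def by simp
qed (use assms(1) in \<open>auto simp: is_subring_def\<close>)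

lemma sub_pow:
  assumes "is_subring R" "x \<in> R" shows "x ^ n \<in> R"
  by (induction n) (use assms in \<open>auto simp: is_subring_def\<close>)

lemma loc_claim:
  assumes f: "f \<noteq> 0" "f \<in> R" and N: "\<And>i. i \<ge> N \<Longrightarrow> v i = 0"
    and R: "is_subring R" and emb: "is_C_embedding emb R" and vR: "\<And>i. v i \<in> R"
  shows "tau f \<alpha> v \<in> localization R f"
proof -
  let ?c = "\<lambda>i. of_rat (pochhammer \<alpha> i) :: 'a"
  have cR: "?c i \<in> R" for i
    using emb_basic(5)[OF emb, of "pochhammer \<alpha> i"] emb unfolding is_C_embedding_def by (metis range_subsetD)
  have "tau f \<alpha> v = (\<Sum>i<N. ?c i * v i / f ^ i)" by (rule tau_N[OF N])
  also have "\<dots> = (\<Sum>i<N. ?c i * v i * f ^ (N - i)) / f ^ N"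
    unfolding sum_divide_distrib
  proof (rule sum.cong)
    fix i assume "i \<in> {..<N}"
    then have "f ^ N = f ^ i * f ^ (N - i)" by (simp add: power_add[symmetric])
    then show "?c i * v i / f ^ i = ?c i * v i * f ^ (N - i) / f ^ N" using f by simp
  qed simp
  finally have "tau f \<alpha> v = (\<Sum>i<N. ?c i * v i * f ^ (N - i)) / f ^ N" .
  moreover have "(\<Sum>i<N. ?c i * v i * f ^ (N - i)) \<in> R"
    using R cR vR sub_pow[OF R f(2)] by (intro sub_sum) (auto simp: is_subring_def)
  ultimately show ?thesis unfolding localization_def by blast
qed

lemma add_claim:
  assumes N: "\<And>i. i \<ge> N \<Longrightarrow> v i = 0" and M: "\<And>i. i \<ge> N \<Longrightarrow> w i = 0"
  shows "tau f \<alpha> (\<lambda>i. v i + w i) = tau f \<alpha> v + tau f \<alpha> w"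
proof -
  have NM: "\<And>i. i \<ge> N \<Longrightarrow> v i + w i = 0" using N M by simp
  have a: "tau f \<alpha> (\<lambda>i. v i + w i) = (\<Sum>i<N. of_rat (pochhammer \<alpha> i) * (v i + w i) / f ^ i)"
    using tau_N[of N "\<lambda>i. v i + w i"] NM by simp
  have b: "tau f \<alpha> v = (\<Sum>i<N. of_rat (pochhammer \<alpha> i) * v i / f ^ i)" by (rule tau_N[OF N])
  have c: "tau f \<alpha> w = (\<Sum>i<N. of_rat (pochhammer \<alpha> i) * w i / f ^ i)" by (rule tau_N[OF M])
  show ?thesis unfolding a b c
    by (simp add: sum.distrib[symmetric] distrib_left add_divide_distrib)
qed

lemma mult_claim:
  assumes N: "\<And>i. i \<ge> N \<Longrightarrow> v i = 0"
  shows "tau f \<alpha> (mult_act a v) = a * tau f \<alpha> v"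
proof -
  have NM: "\<And>i. i \<ge> N \<Longrightarrow> mult_act a v i = 0" using N by (simp add: mult_act_def)
  have b: "tau f \<alpha> v = (\<Sum>i<N. of_rat (pochhammer \<alpha> i) * v i / f ^ i)" by (rule tau_N[OF N])
  have c: "tau f \<alpha> (mult_act a v) = (\<Sum>i<N. of_rat (pochhammer \<alpha> i) * mult_act a v i / f ^ i)" by (rule tau_N[OF NM])
  show ?thesis unfolding b c
    by (simp add: sum_distrib_left mult_act_def algebra_simps)
qed

lemma bound2:
  assumes "v \<in> iplus R" "w \<in> iplus R"
  obtains N where "\<And>i. i \<ge> N \<Longrightarrow> v i = 0" "\<And>i. i \<ge> N \<Longrightarrow> w i = 0"
proof -
  obtain N1 where 1: "\<And>i. i \<ge> N1 \<Longrightarrow> v i = 0" using iplus_bound[OF assms(1)] by blast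
  obtain N2 where 2: "\<And>i. i \<ge> N2 \<Longrightarrow> w i = 0" using iplus_bound[OF assms(2)] by blast
  show ?thesis using that[of "max N1 N2"] 1 2 by simp
qed

theorem mainTheorem15:
  fixes R :: "'a::field_char_0 set" and emb :: "complex \<Rightarrow> 'a" and f :: 'a
    and V :: "rat \<Rightarrow> (nat \<Rightarrow> 'a) set" and \<alpha> :: rat
  assumes O_ring: "is_subring R"
    and emb: "is_C_embedding emb R"
    and f_in: "f \<in> R" and f_nz: "f \<noteq> 0"
    and V_sub: "\<And>\<beta>. V \<beta> \<subseteq> iplus R"
    and V_decr: "\<And>\<beta> \<gamma>. \<beta> \<le> \<gamma> \<Longrightarrow> V \<gamma> \<subseteq> V \<beta>"
    and V_t: "\<And>\<beta> v. v \<in> V \<beta> \<Longrightarrow> t_act f v \<in> V (\<beta> + 1)"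
    and V_dt: "\<And>\<beta> v. v \<in> V \<beta> \<Longrightarrow> dt_act v \<in> V (\<beta> - 1)"
    and V_add: "\<And>\<beta> v w. v \<in> V \<beta> \<Longrightarrow> w \<in> V \<beta> \<Longrightarrow> (\<lambda>i. v i + w i) \<in> V \<beta>"
    and V_mult: "\<And>\<beta> a v. a \<in> R \<Longrightarrow> v \<in> V \<beta> \<Longrightarrow> mult_act a v \<in> V \<beta>"
    and V_der: "\<And>\<beta> P v. is_derivation emb R P \<Longrightarrow> v \<in> V \<beta> \<Longrightarrow> der_act P f v \<in> V \<beta>"
  shows "(\<forall>v\<in>V \<alpha>. tau f \<alpha> v \<in> localization R f)
    \<and> (\<forall>v\<in>V \<alpha>. \<forall>w\<in>V \<alpha>. tau f \<alpha> (\<lambda>i. v i + w i) = tau f \<alpha> v + tau f \<alpha> w)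
    \<and> (\<forall>a\<in>R. \<forall>v\<in>V \<alpha>. tau f \<alpha> (mult_act a v) = a * tau f \<alpha> v)
    \<and> (\<forall>P. is_derivation emb R P \<longrightarrow>
         (\<forall>v\<in>V \<alpha>. tau f \<alpha> (der_act P f v) = M_der P f \<alpha> (tau f \<alpha> v)))
    \<and> (\<forall>v\<in>V \<alpha>. tau f (\<alpha> + 1) (t_act f v) = tau f \<alpha> v * f)
    \<and> (\<forall>v\<in>V (\<alpha> + 1). tau f \<alpha> (dt_act v) * f = of_rat \<alpha> * tau f (\<alpha> + 1) v)"
proof -
  have B: "\<And>v \<beta>. v \<in> V \<beta> \<Longrightarrow> \<exists>N. \<forall>i. i \<ge> N \<longrightarrow> v i = 0"
    using V_sub iplus_bound by (metis subsetD)
  have VR: "\<And>v \<beta> i. v \<in> V \<beta> \<Longrightarrow> v i \<in> R" using V_sub unfolding iplus_def by blast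
  show ?thesis
  proof (intro conjI ballI allI impI)
    fix v assume v: "v \<in> V \<alpha>"
    obtain N where N: "\<forall>i. i \<ge> N \<longrightarrow> v i = 0" using B[OF v] by blast
    show "tau f \<alpha> v \<in> localization R f"
    proof -
      have "\<And>i. v i \<in> R" using VR v by blast
      then show ?thesis using loc_claim[OF f_nz f_in _ O_ring emb] N by blast
    qed
    show "tau f (\<alpha> + 1) (t_act f v) = tau f \<alpha> v * f" using t_claim[OF f_nz] N by blast
  next
    fix v w assume v: "v \<in> V \<alpha>" and w: "w \<in> V \<alpha>"
    obtain N where N: "\<And>i. i \<ge> N \<Longrightarrow> v i = 0" "\<And>i. i \<ge> N \<Longrightarrow> w i = 0"
      using bound2 V_sub v w by (metis subsetD)
    show "tau f \<alpha> (\<lambda>i. v i + w i) = tau f \<alpha> v + tau f \<alpha> w" using add_claim N by blast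
  next
    fix a v assume v: "v \<in> V \<alpha>"
    obtain N where N: "\<forall>i. i \<ge> N \<longrightarrow> v i = 0" using B[OF v] by blast
    show "tau f \<alpha> (mult_act a v) = a * tau f \<alpha> v" using mult_claim N by blast
  next
    fix P v assume P: "is_derivation emb R P" and v: "v \<in> V \<alpha>"
    obtain N where N: "\<forall>i. i \<ge> N \<longrightarrow> v i = 0" using B[OF v] by blast
    show "tau f \<alpha> (der_act P f v) = M_der P f \<alpha> (tau f \<alpha> v)"
      using der_claim[OF f_nz _ P emb] N by blast
  next
    fix v assume v: "v \<in> V (\<alpha> + 1)"
    obtain N where N: "\<forall>i. i \<ge> N \<longrightarrow> v i = 0" using B[OF v] by blast
    show "tau f \<alpha> (dt_act v) * f = of_rat \<alpha> * tau f (\<alpha> + 1) v" using dt_claim[OF f_nz] N by blast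
  qed
qed

end
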